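(* Let $\mathscr N$ be a weakly reversible chemical reaction network such that every decomposition $\mathscr N=\mathscr N_1\cup\cdots\cup\mathscr N_k$ satisfies $\delta=\delta_1+\cdots+\delta_k$. Then every independent decomposition of $\mathscr N$ is weakly reversible.
   Context: A chemical reaction network (CRN) $\mathscr N=(\mathscr S,\mathscr C,\mathscr R)$ consists of: - a finite set $\mathscr S$ of species; - a finite set $\mathscr C\subseteq\mathbb R^{\mathscr S}_{\ge0}$ of complexes; - a set $\mathscr R\subseteq\mathscr C\times\mathscr C$ of reactions (a directed graph on $\mathscr C$), with no reaction $y\to y$ and every complex occurring in some reaction. Linkage classes are the connected components of the underlying undirected graph. The network is weakly reversible if every linkage class is strongly connected. The deficiency is $\delta=n-l-s$, where: - $n$ is the number of complexes; - $l$ is the number of linkage classes; - $s=\dim S$, with $S=\operatorname{span}\{y'-y: y\to y'\in\mathscr R\}$ the stoichiometric subspace. A decomposition $\mathscr N=\mathscr N_1\cup\cdots\cup\mathscr N_k$ is the set of subnetworks induced by a partition $\{\mathscr R_1,\ldots,\mathscr R_k\}$ of $\mathscr R$. Each $\mathscr N_i$ has reactions $\mathscr R_i$ and the complexes occurring in them, with deficiency $\delta_i=n_i-l_i-s_i$. The decomposition is independent if $S=S_1\oplus\cdots\oplus S_k$. It is weakly reversible if every $\mathscr N_i$ is weakly reversible. *)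

theory Defs
  imports "HOL-Analysis.Analysis"
begin

text \<open>Species are the elements of a finite type 's; a complex is a vector in
  real^'s (nonnegative entries); a reaction y \<rightarrow> y' is a pair (y, y').\<close>

type_synonym 's cplx = "real ^ 's"
type_synonym 's reaction = "'s cplx \<times> 's cplx"

definition crn :: "'s::finite reaction set \<Rightarrow> bool" where
  "crn R \<longleftrightarrow> finite R \<and>
     (\<forall>(y, y') \<in> R. y \<noteq> y' \<and> (\<forall>i. 0 \<le> y $ i \<and> 0 \<le> y' $ i))"

definition complexes :: "'s::finite reaction set \<Rightarrow> 's cplx set" where
  "complexes R = fst ` R \<union> snd ` R"

definition linked :: "'s::finite reaction set \<Rightarrow> 's reaction set" where
  "linked R = (R \<union> R\<inverse>)\<^sup>*"

definition linkage_classes :: "'s::finite reaction set \<Rightarrow> 's cplx set set" where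
  "linkage_classes R = complexes R // linked R"

definition weakly_reversible :: "'s::finite reaction set \<Rightarrow> bool" where
  "weakly_reversible R \<longleftrightarrow>
     (\<forall>L \<in> linkage_classes R. \<forall>y \<in> L. \<forall>y' \<in> L. (y, y') \<in> R\<^sup>*)"

definition stoich_subspace :: "'s::finite reaction set \<Rightarrow> 's cplx set" where
  "stoich_subspace R = span {y' - y | y y'. (y, y') \<in> R}"

definition deficiency :: "'s::finite reaction set \<Rightarrow> int" where
  "deficiency R = int (card (complexes R)) - int (card (linkage_classes R))
                   - int (dim (stoich_subspace R))"

definition decomposition :: "'s::finite reaction set \<Rightarrow> nat \<Rightarrow> (nat \<Rightarrow> 's reaction set) \<Rightarrow> bool" where
  "decomposition R k Rs \<longleftrightarrow>
     (\<forall>i<k. Rs i \<noteq> {}) \<and>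
     (\<forall>i<k. \<forall>j<k. i \<noteq> j \<longrightarrow> Rs i \<inter> Rs j = {}) \<and>
     (\<Union>i<k. Rs i) = R"

text \<open>Independent: S is the (internal) direct sum S_1 \<oplus> ... \<oplus> S_k.\<close>
definition independent_decomposition :: "'s::finite reaction set \<Rightarrow> nat \<Rightarrow> (nat \<Rightarrow> 's reaction set) \<Rightarrow> bool" where
  "independent_decomposition R k Rs \<longleftrightarrow>
     decomposition R k Rs \<and>
     stoich_subspace R = {(\<Sum>i<k. v i) | v. \<forall>i<k. v i \<in> stoich_subspace (Rs i)} \<and>
     (\<forall>v. (\<forall>i<k. v i \<in> stoich_subspace (Rs i)) \<and> (\<Sum>i<k. v i) = 0 \<longrightarrow> (\<forall>i<k. v i = 0))"

definition weakly_reversible_decomposition :: "'s::finite reaction set \<Rightarrow> nat \<Rightarrow> (nat \<Rightarrow> 's reaction set) \<Rightarrow> bool" where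
  "weakly_reversible_decomposition R k Rs \<longleftrightarrow>
     decomposition R k Rs \<and> (\<forall>i<k. weakly_reversible (Rs i))"

end

theory Submission
  imports Defs
begin

lemma lc_connected:
  fixes T :: "'s::finite reaction set"
  assumes ne: "complexes T \<noteq> {}"
    and conn: "\<And>z w. z \<in> complexes T \<Longrightarrow> w \<in> complexes T \<Longrightarrow> (z, w) \<in> linked T"
  shows "linkage_classes T = {complexes T}"
proof -
  have cl: "(z, w) \<in> linked T \<Longrightarrow> z \<in> complexes T \<Longrightarrow> w \<in> complexes T" for z w
    unfolding linked_def
    by (induction rule: rtrancl_induct) (force simp: complexes_def)+
  have "linked T `` {z} = complexes T" if "z \<in> complexes T" for z
    using cl conn that by blast
  then show ?thesis using ne unfolding linkage_classes_def quotient_def by auto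
qed

lemma defic_single:
  fixes a b :: "'s::finite cplx"
  assumes "a \<noteq> b"
  shows "deficiency {(a, b)} = 0"
proof -
  have c: "complexes {(a, b)} = {a, b}" by (auto simp: complexes_def)
  have "linkage_classes {(a,b)} = {complexes {(a,b)}}"
    by (rule lc_connected) (auto simp: c linked_def)
  moreover have "stoich_subspace {(a,b)} = span {b - a}"
    unfolding stoich_subspace_def by (rule arg_cong[where f=span]) auto
  ultimately show ?thesis using assms unfolding deficiency_def by (simp add: c)
qed

lemma defic_block:
  fixes R :: "'s::finite reaction set"
  assumes crn: "crn R"
    and H: "\<forall>k Rs. decomposition R k Rs \<longrightarrow> deficiency R = (\<Sum>i<k. deficiency (Rs i))"
    and TR: "T \<subseteq> R" and Tne: "T \<noteq> {}"
  shows "deficiency R = deficiency T"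
proof -
  have fin: "finite (R - T)" using crn unfolding crn_def by auto
  obtain h where h: "bij_betw h {0..<card (R - T)} (R - T)"
    using ex_bij_betw_nat_finite[OF fin] by blast
  define M where "M = card (R - T)"
  define Rs where "Rs = (\<lambda>j::nat. if j = 0 then T else {h (j - 1)})"
  have hin: "j < M \<Longrightarrow> h j \<in> R - T" for j
    using h unfolding M_def bij_betw_def by auto
  have hinj: "i < M \<Longrightarrow> j < M \<Longrightarrow> h i = h j \<Longrightarrow> i = j" for i j
    using h unfolding M_def bij_betw_def inj_on_def by auto
  have himg: "h ` {..<M} = R - T"
    using h unfolding M_def bij_betw_def by (auto simp: atLeast0LessThan)
  have dec: "decomposition R (Suc M) Rs"
    unfolding decomposition_def
  proof (intro conjI allI impI)
    show "\<And>i. i < Suc M \<Longrightarrow> Rs i \<noteq> {}" using Tne by (auto simp: Rs_def)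
    show "Rs i \<inter> Rs j = {}" if "i < Suc M" "j < Suc M" "i \<noteq> j" for i j
    proof (cases "i = 0")
      case True
      then have "j \<noteq> 0" "j - 1 < M" using that by auto
      then show ?thesis using True hin[of "j - 1"] by (simp add: Rs_def)
    next
      case False
      then have i1: "i - 1 < M" using that by auto
      show ?thesis
      proof (cases "j = 0")
        case True then show ?thesis using False i1 hin[of "i - 1"] by (simp add: Rs_def)
      next
        case F2: False
        then have "j - 1 < M" "i - 1 \<noteq> j - 1" using that False by auto
        then have "h (i - 1) \<noteq> h (j - 1)" using hinj i1 by blast
        then show ?thesis using False F2 by (simp add: Rs_def)
      qed
    qed
    have "(\<Union>i<Suc M. Rs i) = T \<union> (\<Union>j<M. {h j})"
    proof (rule set_eqI)
      fix x
      show "x \<in> (\<Union>i<Suc M. Rs i) \<longleftrightarrow> x \<in> T \<union> (\<Union>j<M. {h j})"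
      proof
        assume "x \<in> (\<Union>i<Suc M. Rs i)"
        then obtain i where "i < Suc M" "x \<in> Rs i" by auto
        then show "x \<in> T \<union> (\<Union>j<M. {h j})"
          by (cases "i = 0") (auto simp: Rs_def)
      next
        assume "x \<in> T \<union> (\<Union>j<M. {h j})"
        then show "x \<in> (\<Union>i<Suc M. Rs i)"
        proof
          assume "x \<in> T" then show ?thesis by (auto simp: Rs_def intro!: bexI[of _ 0])
        next
          assume "x \<in> (\<Union>j<M. {h j})"
          then obtain j where "j < M" "x = h j" by auto
          then show ?thesis by (auto simp: Rs_def intro!: bexI[of _ "Suc j"])
        qed
      qed
    qed
    also have "\<dots> = R" using himg TR by auto
    finally show "(\<Union>i<Suc M. Rs i) = R" .
  qed
  have "deficiency R = (\<Sum>i<Suc M. deficiency (Rs i))" using H dec by blast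
  also have "\<dots> = deficiency T + (\<Sum>j<M. deficiency {h j})"
    unfolding sum.lessThan_Suc_shift by (simp add: Rs_def del: sum.lessThan_Suc)
  also have "(\<Sum>j<M. deficiency {h j}) = 0"
  proof (rule sum.neutral, rule ballI)
    fix j assume "j \<in> {..<M}"
    then have "h j \<in> R" using hin by auto
    then obtain a b where ab: "h j = (a, b)" "(a, b) \<in> R" by (cases "h j") auto
    then have "a \<noteq> b" using crn unfolding crn_def by auto
    then show "deficiency {h j} = 0" using ab defic_single by simp
  qed
  finally show ?thesis by simp
qed

lemma linked_sym: "(x, y) \<in> linked T \<Longrightarrow> (y, x) \<in> linked T"
proof -
  assume "(x, y) \<in> linked T"
  then have "(y, x) \<in> ((T \<union> T\<inverse>)\<inverse>)\<^sup>*" unfolding linked_def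
    by (simp add: rtrancl_converseI)
  then show ?thesis unfolding linked_def by (simp add: converse_Un sup_commute)
qed

lemma path_indep:
  fixes f :: "nat \<Rightarrow> 's::finite cplx"
  assumes n: "n \<ge> 1" and inj: "inj_on f {..n}"
    and d0: "deficiency {(f t, f (Suc t)) | t. t < n} = 0"
    and c: "(\<Sum>t<n. c t *\<^sub>R (f (Suc t) - f t)) = 0"
  shows "\<forall>t<n. c t = 0"
proof -
  define T where "T = {(f t, f (Suc t)) | t. t < n}"
  define d where "d = (\<lambda>t. f (Suc t) - f t)"
  define D where "D = d ` {..<n}"
  have cT: "complexes T = f ` {..n}"
  proof
    show "complexes T \<subseteq> f ` {..n}" unfolding complexes_def T_def by force
    show "f ` {..n} \<subseteq> complexes T"
    proof
      fix z assume "z \<in> f ` {..n}"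
      then obtain t where t: "t \<le> n" "z = f t" by auto
      show "z \<in> complexes T"
      proof (cases "t < n")
        case True
        then have "(f t, f (Suc t)) \<in> T" unfolding T_def by auto
        then show ?thesis unfolding complexes_def using t by force
      next
        case False
        then have "t = Suc (n - 1)" using t n by auto
        moreover have "(f (n - 1), f (Suc (n - 1))) \<in> T" unfolding T_def using n by auto
        ultimately show ?thesis unfolding complexes_def using t by force
      qed
    qed
  qed
  have card: "card (complexes T) = Suc n"
    unfolding cT using card_image[OF inj] by simp
  have l0: "j \<le> n \<Longrightarrow> (f 0, f j) \<in> linked T" for j
  proof (induction j)
    case 0 then show ?case by (simp add: linked_def)
  next
    case (Suc j)
    then have "(f j, f (Suc j)) \<in> T" unfolding T_def by auto
    then have "(f j, f (Suc j)) \<in> linked T" unfolding linked_def by auto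
    with Suc show ?case unfolding linked_def by (meson Suc_leD rtrancl_trans)
  qed
  have "linkage_classes T = {complexes T}"
  proof (rule lc_connected)
    show "complexes T \<noteq> {}" unfolding cT by auto
    fix z w assume "z \<in> complexes T" "w \<in> complexes T"
    then obtain i j where "i \<le> n" "j \<le> n" "z = f i" "w = f j" unfolding cT by auto
    then show "(z, w) \<in> linked T"
      using l0 linked_sym unfolding linked_def by (meson rtrancl_trans)
  qed
  then have lc: "card (linkage_classes T) = 1" by simp
  have st: "stoich_subspace T = span D"
    unfolding stoich_subspace_def T_def D_def d_def by (rule arg_cong[where f=span]) auto
  have dimD: "dim D = n"
    using d0 card lc st unfolding T_def[symmetric] deficiency_def by simp
  have finD: "finite D" unfolding D_def by simp
  have cD: "card D \<le> n" unfolding D_def using card_image_le[of "{..<n}" d] by simp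
  have "dim D \<le> card D" using dim_le_card[of D D] finD span_superset by blast
  then have cardD: "card D = n" using cD dimD by simp
  then have injd: "inj_on d {..<n}" unfolding D_def
    by (simp add: eq_card_imp_inj_on)
  have indD: "independent D"
    using card_eq_dim[of D D] finD cardD dimD span_superset by auto
  define c' where "c' = (\<lambda>v. c (inv_into {..<n} d v))"
  have "(\<Sum>v\<in>D. c' v *\<^sub>R v) = (\<Sum>t<n. c' (d t) *\<^sub>R d t)"
    unfolding D_def by (rule sum.reindex[OF injd, unfolded comp_def])
  also have "\<dots> = (\<Sum>t<n. c t *\<^sub>R d t)"
    by (rule sum.cong) (auto simp: c'_def inv_into_f_f[OF injd])
  also have "\<dots> = 0" using c unfolding d_def .
  finally have "\<forall>v\<in>D. c' v = 0" using indD unfolding independent_explicit by blast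
  then show ?thesis unfolding D_def c'_def using inv_into_f_f[OF injd] by force
qed

lemma simple_path:
  assumes "(a, b) \<in> Q\<^sup>*"
  shows "\<exists>n f. f 0 = a \<and> f n = b \<and> (\<forall>i<n. (f i, f (Suc i)) \<in> Q) \<and> inj_on f {..n}"
proof -
  have ex: "\<exists>n. (a, b) \<in> Q ^^ n" using assms rtrancl_power by blast
  define n where "n = (LEAST n. (a, b) \<in> Q ^^ n)"
  have "(a, b) \<in> Q ^^ n" unfolding n_def using ex by (rule LeastI_ex)
  then obtain f where f: "f 0 = a" "f n = b" "\<forall>i<n. (f i, f (Suc i)) \<in> Q"
    using relpow_fun_conv by metis
  have mn: "(a, b) \<in> Q ^^ m \<Longrightarrow> n \<le> m" for m unfolding n_def by (rule Least_le)
  have "inj_on f {..n}"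
  proof (rule ccontr)
    assume "\<not> inj_on f {..n}"
    then obtain i j where ij: "i < j" "j \<le> n" "f i = f j"
      unfolding inj_on_def by (metis atMost_iff linorder_neqE_nat)
    define g where "g = (\<lambda>t. if t \<le> i then f t else f (t + (j - i)))"
    have "g 0 = a" using f by (simp add: g_def)
    moreover have "g (n - (j - i)) = b"
    proof (cases "n - (j - i) \<le> i")
      case True
      then have "j = n" using ij by auto
      then show ?thesis using f ij by (auto simp: g_def)
    next
      case False then show ?thesis using f ij by (auto simp: g_def)
    qed
    moreover have "\<forall>t < n - (j - i). (g t, g (Suc t)) \<in> Q"
    proof (intro allI impI)
      fix t assume t: "t < n - (j - i)"
      show "(g t, g (Suc t)) \<in> Q"
      proof (cases "t < i")
        case True then show ?thesis using f ij t by (auto simp: g_def)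
      next
        case False
        show ?thesis
        proof (cases "t = i")
          case True
          then have "g t = f j" "g (Suc t) = f (Suc j)" using ij by (auto simp: g_def)
          moreover have "j < n" using t True ij by auto
          ultimately show ?thesis using f by simp
        next
          case False2: False
          then have "g t = f (t + (j - i))" "g (Suc t) = f (Suc (t + (j - i)))"
            using False by (auto simp: g_def)
          moreover have "t + (j - i) < n" using t ij by auto
          ultimately show ?thesis using f by simp
        qed
      qed
    qed
    ultimately have "(a, b) \<in> Q ^^ (n - (j - i))" using relpow_fun_conv by metis
    then have "n \<le> n - (j - i)" by (rule mn)
    then show False using ij by auto
  qed
  then show ?thesis using f by blast
qed

lemma wr_intro:
  assumes "\<forall>(a, b) \<in> Q. (b, a) \<in> Q\<^sup>*"
  shows "weakly_reversible Q"
proof -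
  have sub: "linked Q \<subseteq> Q\<^sup>*"
    unfolding linked_def
  proof (rule rtrancl_subset_rtrancl)
    show "Q \<union> Q\<inverse> \<subseteq> Q\<^sup>*" using assms by auto
  qed
  show ?thesis unfolding weakly_reversible_def linkage_classes_def quotient_def
  proof (intro ballI)
    fix L y y' assume "L \<in> (\<Union>x\<in>complexes Q. {linked Q `` {x}})" "y \<in> L" "y' \<in> L"
    then obtain x where "y \<in> linked Q `` {x}" "y' \<in> linked Q `` {x}" by auto
    then have "(x, y) \<in> linked Q" "(x, y') \<in> linked Q" by auto
    then have "(y, y') \<in> linked Q" using linked_sym unfolding linked_def
      by (meson rtrancl_trans)
    then show "(y, y') \<in> Q\<^sup>*" using sub by auto
  qed
qed

lemma part_sum:
  fixes w :: "'a::comm_monoid_add"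
  assumes dec: "decomposition R k Rs" and x: "x \<in> R"
  shows "(\<Sum>j<k. if x \<in> Rs j then w else 0) = w"
proof -
  obtain i0 where i0: "i0 < k" "x \<in> Rs i0" using dec x unfolding decomposition_def by auto
  have "{j. j < k \<and> x \<in> Rs j} = {i0}"
    using dec i0 unfolding decomposition_def by auto
  then have "(\<Sum>j<k. if x \<in> Rs j then w else 0) = (\<Sum>j\<in>{i0}. w)"
    by (subst sum.inter_filter[symmetric]) (auto simp: lessThan_def Collect_conj_eq[symmetric])
  then show ?thesis by simp
qed

theorem mainTheorem6:
  fixes R :: "'s::finite reaction set"
  assumes "crn R"
    and "weakly_reversible R"
    and "\<forall>k Rs. decomposition R k Rs \<longrightarrow> deficiency R = (\<Sum>i<k. deficiency (Rs i))"
    and "independent_decomposition R k Rs"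
  shows "weakly_reversible_decomposition R k Rs"
proof -
  note crn = assms(1) and wrR = assms(2) and H = assms(3) and ind = assms(4)
  have dec: "decomposition R k Rs" using ind unfolding independent_decomposition_def by blast
  have indep: "\<And>v. (\<forall>i<k. v i \<in> stoich_subspace (Rs i)) \<Longrightarrow> (\<Sum>i<k. v i) = 0 \<Longrightarrow> \<forall>i<k. v i = 0"
    using ind unfolding independent_decomposition_def by blast
  have "weakly_reversible (Rs i)" if ik: "i < k" for i
  proof (rule wr_intro, clarify)
    fix y y' assume yy: "(y, y') \<in> Rs i"
    show "(y', y) \<in> (Rs i)\<^sup>*"
    proof (rule ccontr)
      assume nback: "(y', y) \<notin> (Rs i)\<^sup>*"
      have yR: "(y, y') \<in> R" using dec yy ik unfolding decomposition_def by auto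
      then have yne: "y \<noteq> y'" using crn unfolding crn_def by auto
      have "y \<in> complexes R" using yR unfolding complexes_def by force
      then have Lc: "linked R `` {y} \<in> linkage_classes R"
        unfolding linkage_classes_def quotient_def by auto
      have "y \<in> linked R `` {y}" "y' \<in> linked R `` {y}"
        using yR unfolding linked_def by auto
      then have "(y', y) \<in> R\<^sup>*" using wrR Lc unfolding weakly_reversible_def by blast
      then obtain n f where f: "f 0 = y'" "f n = y" "\<forall>t<n. (f t, f (Suc t)) \<in> R"
        and inj: "inj_on f {..n}" using simple_path by metis
      have n1: "n \<ge> 1" using f yne by (cases n) auto
      define T where "T = {(f t, f (Suc t)) | t. t < n}"
      have TR: "T \<subseteq> R" using f unfolding T_def by auto
      have Tne: "T \<noteq> {}" using n1 unfolding T_def by (auto intro: exI[of _ 0])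
      have dT: "deficiency T = 0"
        using defic_block[OF crn H TR Tne] defic_block[OF crn H, of "{(y, y')}"] yR
          defic_single[OF yne] by auto
      define d where "d = (\<lambda>t. f (Suc t) - f t)"
      define v where "v = (\<lambda>j. (\<Sum>t<n. if (f t, f (Suc t)) \<in> Rs j then d t else 0)
                               + (if (y, y') \<in> Rs j then y' - y else 0))"
      have vS: "\<forall>j<k. v j \<in> stoich_subspace (Rs j)"
      proof (intro allI impI)
        fix j assume "j < k"
        have "(if (f t, f (Suc t)) \<in> Rs j then d t else 0) \<in> stoich_subspace (Rs j)" for t
          unfolding stoich_subspace_def d_def
          by (auto intro!: span_base simp: span_zero)
        moreover have "(if (y, y') \<in> Rs j then y' - y else 0) \<in> stoich_subspace (Rs j)"
          unfolding stoich_subspace_def by (auto intro!: span_base simp: span_zero)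
        ultimately show "v j \<in> stoich_subspace (Rs j)"
          unfolding v_def stoich_subspace_def by (intro span_add span_sum) auto
      qed
      have "(\<Sum>j<k. v j) = (\<Sum>t<n. \<Sum>j<k. if (f t, f (Suc t)) \<in> Rs j then d t else 0)
                         + (\<Sum>j<k. if (y, y') \<in> Rs j then y' - y else 0)"
        unfolding v_def by (simp add: sum.distrib sum.swap[of _ "{..<k}"])
      also have "\<dots> = (\<Sum>t<n. d t) + (y' - y)"
        using part_sum[OF dec] f yR by (intro arg_cong2[where f="(+)"] sum.cong) auto
      also have "(\<Sum>t<n. d t) = y - y'"
        unfolding d_def using f by (simp add: sum_lessThan_telescope)
      finally have "(\<Sum>j<k. v j) = 0" by simp
      then have "v i = 0" using indep vS ik by blast
      define c where "c = (\<lambda>t. (if (f t, f (Suc t)) \<in> Rs i then 1 else 0) - (1::real))"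
      have "(\<Sum>t<n. c t *\<^sub>R (f (Suc t) - f t))
            = (\<Sum>t<n. if (f t, f (Suc t)) \<in> Rs i then d t else 0) - (\<Sum>t<n. d t)"
        unfolding c_def d_def sum_subtractf[symmetric] by (rule sum.cong) (auto simp: scaleR_diff_left)
      also have "\<dots> = v i - (y' - y) - (\<Sum>t<n. d t)" using yy unfolding v_def by simp
      also have "(\<Sum>t<n. d t) = y - y'"
        unfolding d_def using f by (simp add: sum_lessThan_telescope)
      finally have "(\<Sum>t<n. c t *\<^sub>R (f (Suc t) - f t)) = 0" using \<open>v i = 0\<close> by simp
      then have "\<forall>t<n. c t = 0" using path_indep[OF n1 inj] dT unfolding T_def by blast
      then have "\<forall>t<n. (f t, f (Suc t)) \<in> Rs i" unfolding c_def by (auto split: if_splits)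
      then have "(f 0, f n) \<in> (Rs i) ^^ n" using relpow_fun_conv by metis
      then have "(y', y) \<in> (Rs i)\<^sup>*" using f rtrancl_power by metis
      then show False using nback by simp
    qed
  qed
  then show ?thesis unfolding weakly_reversible_decomposition_def using dec by blast
qed

end
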